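(* There is an absolute constant $C>0$ such that the following holds. Let $F$ be a distribution with PDF $f$, let $\epsilon>0$ and let $x_1<x_2<\dots<x_m$ be points. Suppose that for each $i$ we have numbers $F_i\in[0,1]$ with $F(x_i)\in[F_i-\epsilon,F_i+\epsilon]$, and that for each $i<m$ either $x_{i+1}-x_i\le\epsilon$, or there are numbers $\underline f_i\le\overline f_i$ with $f(x)\in[\underline f_i,\overline f_i]$ for all $x\in[x_i,x_{i+1}]$ and $(x_{i+1}-x_i)(\overline f_i-\underline f_i)\le\epsilon$. Let $F_{(1)}\le\dots\le F_{(m)}$ be the values $F_1,\dots,F_m$ sorted in non-decreasing order, and let $\hat F$ be the function with $\hat F(x_i)=F_{(i)}$ that is linear on each $[x_i,x_{i+1}]$. Then for all $v\in[x_1,x_m]$, $F(v-C\epsilon)-C\epsilon\le\hat F(v)\le F(v+C\epsilon)+C\epsilon$, i.e. $\hat F$ is within $O(\epsilon)$ Lévy distance of $F$ on $[x_1,x_m]$. *)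

theory Defs
  imports "HOL-Analysis.Analysis"
begin

text \<open>Points are indexed 0..m-1 (paper: 1..m). Piecewise linear interpolation
  through (x i, y i), i < m, evaluated at v; on [x i, x (i+1)] it is linear.\<close>
definition pw_lin :: "(nat \<Rightarrow> real) \<Rightarrow> (nat \<Rightarrow> real) \<Rightarrow> nat \<Rightarrow> real \<Rightarrow> real" where
  "pw_lin x y m v =
     (if \<exists>i. Suc i < m \<and> x i \<le> v \<and> v \<le> x (Suc i) then
        (let i = (LEAST i. Suc i < m \<and> x i \<le> v \<and> v \<le> x (Suc i)) in
           y i + (y (Suc i) - y i) * (v - x i) / (x (Suc i) - x i))
      else y 0)"

definition sorted_val :: "(nat \<Rightarrow> real) \<Rightarrow> nat \<Rightarrow> nat \<Rightarrow> real" where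
  "sorted_val Fv m i = sort (map Fv [0..<m]) ! i"

end

theory Submission imports Defs begin
lemma int_sub:
  fixes f :: "real \<Rightarrow> real"
  assumes "\<And>t. 0 \<le> f t" "(f has_integral 1) UNIV" "S \<in> sets lebesgue"
  shows "f integrable_on S"
proof -
  have "f absolutely_integrable_on UNIV"
    using assms by (meson absolutely_integrable_on_iff_nonneg has_integral_integrable)
  then have "f absolutely_integrable_on S"
    using set_integrable_subset assms(3) by blast
  then show ?thesis using absolutely_integrable_on_def by blast
qed

lemma Fdiff:
  fixes f :: "real \<Rightarrow> real"
  assumes "\<And>t. 0 \<le> f t" "(f has_integral 1) UNIV" "a \<le> b"
  shows "integral {..b} f = integral {..a} f + integral {a..b} f"
proof -
  have 1: "(f has_integral integral {..a} f) {..a}"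
    using int_sub[OF assms(1,2)] by (simp add: integrable_integral)
  have 2: "(f has_integral integral {a..b} f) {a..b}"
    using int_sub[OF assms(1,2)] by (simp add: integrable_integral)
  have "{..a} \<inter> {a..b} = {a}" using assms(3) by auto
  then have "negligible ({..a} \<inter> {a..b})" by simp
  from has_integral_Un[OF 1 2 this] have "(f has_integral (integral {..a} f + integral {a..b} f)) ({..a} \<union> {a..b})" .
  moreover have "{..a} \<union> {a..b} = {..b}" using assms(3) by auto
  ultimately show ?thesis by (simp add: integral_unique)
qed

lemma int_bounds:
  fixes f :: "real \<Rightarrow> real"
  assumes "\<And>t. 0 \<le> f t" "(f has_integral 1) UNIV" "a \<le> b" "\<forall>t\<in>{a..b}. lo \<le> f t \<and> f t \<le> hi"
  shows "lo * (b - a) \<le> integral {a..b} f \<and> integral {a..b} f \<le> hi * (b - a)"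
proof -
  have fi: "f integrable_on {a..b}" using int_sub[OF assms(1,2)] by simp
  have "integral {a..b} (\<lambda>_. lo) \<le> integral {a..b} f"
    by (rule integral_le) (use fi assms(4) in auto)
  moreover have "integral {a..b} f \<le> integral {a..b} (\<lambda>_. hi)"
    by (rule integral_le) (use fi assms(4) in auto)
  ultimately show ?thesis using assms(3) by (simp add: mult.commute)
qed

lemma F_mono:
  fixes f :: "real \<Rightarrow> real"
  assumes "\<And>t. 0 \<le> f t" "(f has_integral 1) UNIV" "a \<le> b"
  shows "integral {..a} f \<le> integral {..b} f"
proof -
  have "0 \<le> integral {a..b} f"
    by (rule Henstock_Kurzweil_Integration.integral_nonneg) (use int_sub[OF assms(1,2)] assms(1) in auto)
  then show ?thesis using Fdiff[OF assms] by simp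
qed

lemma sort_le:
  fixes xs :: "real list"
  assumes "i < length (filter (\<lambda>y. y \<le> c) xs)"
  shows "sort xs ! i \<le> c"
proof (rule ccontr)
  assume "\<not> sort xs ! i \<le> c"
  define s where "s = sort xs"
  have i: "i < length s" using assms s_def length_filter_le[of _ xs] by (metis length_sort order.strict_trans2)
  have sor: "sorted s" by (simp add: s_def)
  have "\<forall>y\<in>set (drop i s). \<not> y \<le> c"
  proof
    fix y assume "y \<in> set (drop i s)"
    then obtain j where j: "j < length s" "i \<le> j" "y = s ! j"
      by (auto simp: in_set_conv_nth) (metis add.commute le_add2 less_diff_conv)
    then have "s ! i \<le> y" using sor by (simp add: sorted_nth_mono)
    then show "\<not> y \<le> c" using \<open>\<not> sort xs ! i \<le> c\<close> s_def by auto
  qed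
  then have "filter (\<lambda>y. y \<le> c) (drop i s) = []" by (simp add: filter_empty_conv)
  then have "length (filter (\<lambda>y. y \<le> c) s) \<le> i"
  proof -
    have "filter (\<lambda>y. y \<le> c) s = filter (\<lambda>y. y \<le> c) (take i s)"
      using \<open>filter (\<lambda>y. y \<le> c) (drop i s) = []\<close>
      by (metis append_Nil2 append_take_drop_id filter_append)
    also have "length \<dots> \<le> length (take i s)" by (rule length_filter_le)
    finally show ?thesis using i by simp
  qed
  moreover have "length (filter (\<lambda>y. y \<le> c) s) = length (filter (\<lambda>y. y \<le> c) xs)"
    by (metis s_def mset_filter mset_sort size_mset)
  ultimately show False using assms by simp
qed

lemma le_sort:
  fixes xs :: "real list"
  assumes "length (filter (\<lambda>y. y < c) xs) \<le> i" "i < length xs"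
  shows "c \<le> sort xs ! i"
proof (rule ccontr)
  assume a: "\<not> c \<le> sort xs ! i"
  define s where "s = sort xs"
  have i: "i < length s" using assms s_def by simp
  have sor: "sorted s" by (simp add: s_def)
  have "\<forall>y\<in>set (take (Suc i) s). y < c"
  proof
    fix y assume "y \<in> set (take (Suc i) s)"
    then obtain j where "j < length (take (Suc i) s)" "take (Suc i) s ! j = y"
      by (meson in_set_conv_nth)
    then have j: "j \<le> i" "y = s ! j" using i by auto
    then have "y \<le> s ! i" using sor i by (simp add: sorted_nth_mono)
    then show "y < c" using a s_def by auto
  qed
  then have "filter (\<lambda>y. y < c) (take (Suc i) s) = take (Suc i) s" by simp
  then have "Suc i \<le> length (filter (\<lambda>y. y < c) s)"
  proof -
    have "filter (\<lambda>y. y < c) s = take (Suc i) s @ filter (\<lambda>y. y < c) (drop (Suc i) s)"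
      using \<open>filter (\<lambda>y. y < c) (take (Suc i) s) = take (Suc i) s\<close>
      by (metis append_take_drop_id filter_append)
    then have "length (filter (\<lambda>y. y < c) s) \<ge> length (take (Suc i) s)" by simp
    then show ?thesis using i by simp
  qed
  moreover have "length (filter (\<lambda>y. y < c) s) = length (filter (\<lambda>y. y < c) xs)"
    by (metis s_def mset_filter mset_sort size_mset)
  ultimately show False using assms by simp
qed

lemma sorted_close:
  fixes a Fv :: "nat \<Rightarrow> real"
  assumes am: "\<And>j k. j \<le> k \<Longrightarrow> k < m \<Longrightarrow> a j \<le> a k"
    and cl: "\<And>j. j < m \<Longrightarrow> Fv j - \<epsilon> \<le> a j \<and> a j \<le> Fv j + \<epsilon>"
    and i: "i < m"
  shows "a i - \<epsilon> \<le> sorted_val Fv m i \<and> sorted_val Fv m i \<le> a i + \<epsilon>"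
proof
  have eq: "\<And>P. length (filter P (map Fv [0..<m])) = card {k. k < m \<and> P (Fv k)}"
  proof -
    fix P :: "real \<Rightarrow> bool"
    have "{i. i < m \<and> P (map Fv [0..<m] ! i)} = {k. k < m \<and> P (Fv k)}" by auto
    then show "length (filter P (map Fv [0..<m])) = card {k. k < m \<and> P (Fv k)}"
      by (simp add: length_filter_conv_card)
  qed
  have "card {k. k < m \<and> Fv k < a i - \<epsilon>} \<le> card {..<i}"
  proof (rule card_mono)
    show "{k. k < m \<and> Fv k < a i - \<epsilon>} \<subseteq> {..<i}"
    proof
      fix k assume k: "k \<in> {k. k < m \<and> Fv k < a i - \<epsilon>}"
      show "k \<in> {..<i}"
      proof (rule ccontr)
        assume "k \<notin> {..<i}"
        then have "i \<le> k" by simp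
        then have "a i \<le> a k" using am k by auto
        then show False using k cl[of k] by auto
      qed
    qed
  qed simp
  then have "length (filter (\<lambda>y. y < a i - \<epsilon>) (map Fv [0..<m])) \<le> i"
    using eq by simp
  from le_sort[OF this] show "a i - \<epsilon> \<le> sorted_val Fv m i"
    using i by (simp add: sorted_val_def)
next
  have eq: "\<And>P. length (filter P (map Fv [0..<m])) = card {k. k < m \<and> P (Fv k)}"
  proof -
    fix P :: "real \<Rightarrow> bool"
    have "{i. i < m \<and> P (map Fv [0..<m] ! i)} = {k. k < m \<and> P (Fv k)}" by auto
    then show "length (filter P (map Fv [0..<m])) = card {k. k < m \<and> P (Fv k)}"
      by (simp add: length_filter_conv_card)
  qed
  have "card {..i} \<le> card {k. k < m \<and> Fv k \<le> a i + \<epsilon>}"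
  proof (rule card_mono)
    show "{..i} \<subseteq> {k. k < m \<and> Fv k \<le> a i + \<epsilon>}"
    proof
      fix k assume k: "k \<in> {..i}"
      then have "a k \<le> a i" using am i by auto
      then show "k \<in> {k. k < m \<and> Fv k \<le> a i + \<epsilon>}" using k i cl[of k] by auto
    qed
  qed simp
  then have "i < length (filter (\<lambda>y. y \<le> a i + \<epsilon>) (map Fv [0..<m]))"
    using eq by simp
  from sort_le[OF this] show "sorted_val Fv m i \<le> a i + \<epsilon>"
    by (simp add: sorted_val_def)
qed

lemma interp:
  fixes t p q lo hi :: real
  assumes "0 \<le> t" "t \<le> 1" "lo \<le> p" "p \<le> hi" "lo \<le> q" "q \<le> hi"
  shows "lo \<le> p + (q - p) * t \<and> p + (q - p) * t \<le> hi"
proof -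
  have e: "p + (q - p) * t = (1 - t) * p + t * q" by algebra
  have "(1 - t) * lo \<le> (1 - t) * p" "t * lo \<le> t * q" "(1 - t) * p \<le> (1 - t) * hi" "t * q \<le> t * hi"
    using assms by (simp_all add: mult_left_mono)
  moreover have "(1 - t) * lo + t * lo = lo" "(1 - t) * hi + t * hi = hi" by (simp_all add: algebra_simps)
  ultimately show ?thesis unfolding e by linarith
qed

lemma exists_seg:
  fixes x :: "nat \<Rightarrow> real"
  shows "1 \<le> n \<Longrightarrow> n < m \<Longrightarrow> x 0 \<le> v \<Longrightarrow> v \<le> x n \<Longrightarrow> (\<exists>i. Suc i < m \<and> x i \<le> v \<and> v \<le> x (Suc i))"
proof (induction n)
  case 0 then show ?case by simp
next
  case (Suc k)
  show ?case
  proof (cases "k = 0")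
    case True then show ?thesis using Suc by auto
  next
    case False
    show ?thesis
    proof (cases "v \<le> x k")
      case True then show ?thesis using Suc False by auto
    next
      case f2: False then show ?thesis using Suc by (intro exI[of _ k]) auto
    qed
  qed
qed

lemma xmono:
  fixes x :: "nat \<Rightarrow> real"
  assumes "\<forall>i. Suc i < m \<longrightarrow> x i < x (Suc i)"
  shows "j \<le> k \<Longrightarrow> k < m \<Longrightarrow> x j \<le> x k"
proof (induction k)
  case 0 then show ?case by simp
next
  case (Suc k)
  show ?case
  proof (cases "j = Suc k")
    case True then show ?thesis by simp
  next
    case False
    then have "j \<le> k" using Suc.prems by simp
    then have "x j \<le> x k" using Suc by simp
    moreover have "x k < x (Suc k)" using assms Suc.prems by simp
    ultimately show ?thesis by simp
  qed
qed

theorem lemma1: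
  "\<exists>C>0. \<forall>(f :: real \<Rightarrow> real) (F :: real \<Rightarrow> real) (\<epsilon> :: real) (m :: nat)
      (x :: nat \<Rightarrow> real) (Fv :: nat \<Rightarrow> real).
     (\<forall>t. 0 \<le> f t) \<and> (f has_integral 1) UNIV \<and> (\<forall>t. F t = integral {..t} f) \<and>
     \<epsilon> > 0 \<and> m \<ge> 1 \<and>
     (\<forall>i. Suc i < m \<longrightarrow> x i < x (Suc i)) \<and>
     (\<forall>i<m. 0 \<le> Fv i \<and> Fv i \<le> 1 \<and> Fv i - \<epsilon> \<le> F (x i) \<and> F (x i) \<le> Fv i + \<epsilon>) \<and>
     (\<forall>i. Suc i < m \<longrightarrow>
        x (Suc i) - x i \<le> \<epsilon> \<or>
        (\<exists>flo fhi. flo \<le> fhi \<and> (\<forall>t\<in>{x i..x (Suc i)}. flo \<le> f t \<and> f t \<le> fhi) \<and>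
                   (x (Suc i) - x i) * (fhi - flo) \<le> \<epsilon>))
     \<longrightarrow> (\<forall>v\<in>{x 0..x (m - 1)}.
            F (v - C * \<epsilon>) - C * \<epsilon> \<le> pw_lin x (sorted_val Fv m) m v \<and>
            pw_lin x (sorted_val Fv m) m v \<le> F (v + C * \<epsilon>) + C * \<epsilon>)"
proof (rule exI[of _ 2], rule conjI, simp, intro allI impI ballI)
  fix f F :: "real \<Rightarrow> real" and \<epsilon> :: real and m :: nat and x Fv :: "nat \<Rightarrow> real" and v :: real
  assume H: "(\<forall>t. 0 \<le> f t) \<and> (f has_integral 1) UNIV \<and> (\<forall>t. F t = integral {..t} f) \<and>
     \<epsilon> > 0 \<and> m \<ge> 1 \<and>
     (\<forall>i. Suc i < m \<longrightarrow> x i < x (Suc i)) \<and>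
     (\<forall>i<m. 0 \<le> Fv i \<and> Fv i \<le> 1 \<and> Fv i - \<epsilon> \<le> F (x i) \<and> F (x i) \<le> Fv i + \<epsilon>) \<and>
     (\<forall>i. Suc i < m \<longrightarrow>
        x (Suc i) - x i \<le> \<epsilon> \<or>
        (\<exists>flo fhi. flo \<le> fhi \<and> (\<forall>t\<in>{x i..x (Suc i)}. flo \<le> f t \<and> f t \<le> fhi) \<and>
                   (x (Suc i) - x i) * (fhi - flo) \<le> \<epsilon>))"
    and v: "v \<in> {x 0..x (m - 1)}"
  have f0: "\<And>t. 0 \<le> f t" and f1: "(f has_integral 1) UNIV" and Fdef: "\<And>t. F t = integral {..t} f"
    and ep: "\<epsilon> > 0" and m1: "m \<ge> 1" and xs: "\<forall>i. Suc i < m \<longrightarrow> x i < x (Suc i)"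
    and cl: "\<And>i. i < m \<Longrightarrow> Fv i - \<epsilon> \<le> F (x i) \<and> F (x i) \<le> Fv i + \<epsilon>"
    and seg: "\<And>i. Suc i < m \<Longrightarrow> x (Suc i) - x i \<le> \<epsilon> \<or>
        (\<exists>flo fhi. flo \<le> fhi \<and> (\<forall>t\<in>{x i..x (Suc i)}. flo \<le> f t \<and> f t \<le> fhi) \<and>
                   (x (Suc i) - x i) * (fhi - flo) \<le> \<epsilon>)"
    using H by auto
  have Fm: "\<And>a b. a \<le> b \<Longrightarrow> F a \<le> F b" using F_mono[OF f0 f1] Fdef by simp
  have Fd: "\<And>a b. a \<le> b \<Longrightarrow> F b = F a + integral {a..b} f" using Fdiff[OF f0 f1] Fdef by simp
  define y where "y = sorted_val Fv m"
  have yc: "\<And>j. j < m \<Longrightarrow> F (x j) - \<epsilon> \<le> y j \<and> y j \<le> F (x j) + \<epsilon>"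
    unfolding y_def
    by (rule sorted_close[where a="\<lambda>j. F (x j)"]) (use Fm xmono[OF xs] cl in auto)
  have Fv1: "F (v - 2 * \<epsilon>) \<le> F v" "F v \<le> F (v + 2 * \<epsilon>)" using ep Fm by auto
  show "F (v - 2 * \<epsilon>) - 2 * \<epsilon> \<le> pw_lin x (sorted_val Fv m) m v \<and>
        pw_lin x (sorted_val Fv m) m v \<le> F (v + 2 * \<epsilon>) + 2 * \<epsilon>"
  proof (cases "\<exists>i. Suc i < m \<and> x i \<le> v \<and> v \<le> x (Suc i)")
    case False
    have "m = 1"
    proof (rule ccontr)
      assume "m \<noteq> 1"
      then have "1 \<le> m - 1" "m - 1 < m" using m1 by auto
      then show False using exists_seg[of "m - 1" m x v] v False by auto
    qed
    then have vx: "v = x 0" using v by auto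
    have "pw_lin x (sorted_val Fv m) m v = y 0" using False unfolding pw_lin_def y_def by (simp only: if_False)
    then show ?thesis using yc[of 0] m1 Fv1 vx ep by auto
  next
    case True
    define i where "i = (LEAST i. Suc i < m \<and> x i \<le> v \<and> v \<le> x (Suc i))"
    have iP: "Suc i < m \<and> x i \<le> v \<and> v \<le> x (Suc i)"
      unfolding i_def using True by (metis (mono_tags, lifting) LeastI)
    define h where "h = x (Suc i) - x i"
    have hp: "h > 0" using xs iP h_def by auto
    define t where "t = (v - x i) / h"
    have t01: "0 \<le> t" "t \<le> 1" using iP hp by (auto simp: t_def h_def field_simps)
    have th: "t * h = v - x i" using hp by (simp add: t_def)
    have pw: "pw_lin x (sorted_val Fv m) m v = y i + (y (Suc i) - y i) * t"
      using True by (simp add: pw_lin_def y_def i_def[symmetric] Let_def t_def h_def)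
    have ai: "F (x i) \<le> F (x (Suc i))" using Fm iP by auto
    have yi: "F (x i) - \<epsilon> \<le> y i \<and> y i \<le> F (x i) + \<epsilon>"
      "F (x (Suc i)) - \<epsilon> \<le> y (Suc i) \<and> y (Suc i) \<le> F (x (Suc i)) + \<epsilon>"
      using yc iP by auto
    from seg[of i] iP consider "h \<le> \<epsilon>" | flo fhi where "flo \<le> fhi"
      "\<forall>t\<in>{x i..x (Suc i)}. flo \<le> f t \<and> f t \<le> fhi" "h * (fhi - flo) \<le> \<epsilon>"
      unfolding h_def by blast
    then show ?thesis
    proof cases
      case 1
      have b: "F (x i) - \<epsilon> \<le> y i + (y (Suc i) - y i) * t \<and> y i + (y (Suc i) - y i) * t \<le> F (x (Suc i)) + \<epsilon>"
        by (rule interp) (use t01 yi ai in auto)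
      have "F (v - 2 * \<epsilon>) \<le> F (x i)" using 1 iP ep h_def by (intro Fm) auto
      moreover have "F (x (Suc i)) \<le> F (v + 2 * \<epsilon>)" using 1 iP ep h_def by (intro Fm) auto
      ultimately show ?thesis using pw b ep by auto
    next
      case 2
      define I1 where "I1 = integral {x i..v} f"
      define I2 where "I2 = integral {x i..x (Suc i)} f"
      have FvI: "F v = F (x i) + I1" using Fd iP I1_def by auto
      have FsI: "F (x (Suc i)) = F (x i) + I2" using Fd iP I2_def by auto
      have b1: "flo * (v - x i) \<le> I1 \<and> I1 \<le> fhi * (v - x i)"
        unfolding I1_def by (rule int_bounds[OF f0 f1]) (use iP 2 in auto)
      have b2: "flo * h \<le> I2 \<and> I2 \<le> fhi * h"
        unfolding I2_def h_def by (rule int_bounds[OF f0 f1]) (use iP 2 in auto)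
      have b2t: "flo * (v - x i) \<le> I2 * t \<and> I2 * t \<le> fhi * (v - x i)"
      proof -
        have "flo * h * t \<le> I2 * t" "I2 * t \<le> fhi * h * t" using b2 t01 by (simp_all add: mult_right_mono)
        moreover have "flo * h * t = flo * (v - x i)" "fhi * h * t = fhi * (v - x i)"
          using th by (simp_all add: mult.assoc mult.commute[of h t])
        ultimately show ?thesis by simp
      qed
      have dv: "(fhi - flo) * (v - x i) \<le> \<epsilon>"
      proof -
        have "(fhi - flo) * (v - x i) \<le> (fhi - flo) * h"
          using 2 iP h_def by (intro mult_left_mono) auto
        then show ?thesis using 2 by (simp add: mult.commute)
      qed
      have e1: "\<bar>I1 - I2 * t\<bar> \<le> \<epsilon>" using b1 b2t dv by (simp add: algebra_simps abs_le_iff)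
      have b: "- \<epsilon> \<le> (y i - F (x i)) + ((y (Suc i) - F (x (Suc i))) - (y i - F (x i))) * t \<and>
               (y i - F (x i)) + ((y (Suc i) - F (x (Suc i))) - (y i - F (x i))) * t \<le> \<epsilon>"
        by (rule interp) (use t01 yi in auto)
      have ex: "y i + (y (Suc i) - y i) * t = F v - (I1 - I2 * t) +
          ((y i - F (x i)) + ((y (Suc i) - F (x (Suc i))) - (y i - F (x i))) * t)"
        using FvI FsI by (simp add: algebra_simps)
      have "\<bar>y i + (y (Suc i) - y i) * t - F v\<bar> \<le> 2 * \<epsilon>"
        using ex e1 b by (simp add: abs_le_iff)
      then show ?thesis using pw Fv1 by (simp add: abs_le_iff)
    qed
  qed
qed

end
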